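(* Let $X$ be an integrable random variable (i.e. $\mathbb{E}[|X|]<\infty$), let $N\sim\mathcal{N}(0,1)$ be independent of $X$, and set $Y=X+N$. Then there is no polynomial $q$ with real coefficients and $\deg q\ge 2$ such that $\mathbb{E}[X\mid Y]=q(Y)$ almost surely. Moreover, if $X$ has finite variance, then $\mathbb{E}[X\mid Y]$ is almost surely equal to a polynomial in $Y$ if and only if $X$ is Gaussian or almost surely constant.
   Context: $\mathbb{E}[X\mid Y]$ denotes the conditional expectation of $X$ given $\sigma(Y)$. *)

theory Defs
  imports "HOL-Probability.Probability" "HOL-Computational_Algebra.Polynomial"
begin

end

theory Submission
  imports Defs
begin



lemma cont_ae_eq:
  fixes f g :: "real \<Rightarrow> real"
  assumes cf: "\<And>x. isCont f x" and cg: "\<And>x. isCont g x"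
    and ae: "AE x in lborel. f x = g x"
  shows "f y = g y"
proof (rule ccontr)
  assume ne: "f y \<noteq> g y"
  have "isCont (\<lambda>x. f x - g x) y" using cf cg by (intro continuous_intros)
  then obtain e where e: "e > 0" "\<And>x. dist y x < e \<Longrightarrow> f x - g x \<noteq> 0"
    using continuous_at_avoid[of y "\<lambda>x. f x - g x" 0] ne by auto
  from ae obtain Nl where Nl0: "{x \<in> space lborel. \<not> f x = g x} \<subseteq> Nl" "emeasure lborel Nl = 0" "Nl \<in> sets lborel"
    by (rule AE_E)
  then have Nl: "{x \<in> space lborel. \<not> f x = g x} \<subseteq> Nl" "Nl \<in> null_sets lborel"
    by (auto intro: null_setsI)
  have sub: "{y - e <..< y + e} \<subseteq> Nl"
  proof
    fix x assume "x \<in> {y - e <..< y + e}"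
    then have "dist y x < e" by (auto simp: dist_real_def)
    then show "x \<in> Nl" using e Nl by auto
  qed
  have "emeasure lborel {y - e <..< y + e} \<le> emeasure lborel Nl"
    using Nl sub by (intro emeasure_mono) auto
  also have "\<dots> = 0" using Nl by auto
  finally show False using e by simp
qed

lemma poly_at_top:
  fixes p :: "real poly"
  assumes "degree p \<ge> 1" "lead_coeff p > 0"
  shows "filterlim (poly p) at_top at_top"
proof -
  have lim: "((\<lambda>x. poly p x / x ^ degree p) \<longlongrightarrow> lead_coeff p) at_top"
    using poly_divide_tendsto_aux[of p] by (rule filterlim_mono) (auto simp: at_top_le_at_infinity)
  have pw: "filterlim (\<lambda>x::real. x ^ degree p) at_top at_top"
    using assms by (intro filterlim_pow_at_top filterlim_ident) auto
  have "filterlim (\<lambda>x. poly p x / x ^ degree p * x ^ degree p) at_top at_top"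
    by (rule filterlim_tendsto_pos_mult_at_top[OF lim assms(2) pw])
  moreover have "eventually (\<lambda>x. poly p x / x ^ degree p * x ^ degree p = poly p x) at_top"
    using eventually_gt_at_top[of "0::real"] by eventually_elim simp
  ultimately show ?thesis by (rule iffD1[OF filterlim_cong[OF refl refl], rotated])
qed

abbreviation "phi \<equiv> std_normal_density"

lemma phi_deriv: "(phi has_real_derivative (- z * phi z)) (at z)"
proof -
  have s: "sqrt (2 * pi) / (2 * pi) = 1 / sqrt (2 * pi)"
  proof -
    have "sqrt (2*pi) * sqrt (2*pi) = 2 * pi" by simp
    then show ?thesis using pi_gt_zero by (simp add: field_simps)
  qed
  have eq: "exp (- (z\<^sup>2 / 2)) * z * sqrt (2 * pi) / (2 * pi) = z * exp (- (z\<^sup>2 / 2)) / sqrt (2 * pi)"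
  proof -
    have "exp (- (z\<^sup>2 / 2)) * z * sqrt (2 * pi) / (2 * pi) = exp (- (z\<^sup>2 / 2)) * z * (sqrt (2 * pi) / (2 * pi))" by simp
    also have "\<dots> = exp (- (z\<^sup>2 / 2)) * z * (1 / sqrt (2 * pi))" by (simp only: s)
    finally show ?thesis by simp
  qed
  show ?thesis
    unfolding std_normal_density_def[abs_def]
    by (auto intro!: derivative_eq_intros simp: std_normal_density_def eq)
qed

lemma z_phi_bound: "\<bar>z * phi z\<bar> \<le> 1"
proof -
  have "\<bar>z\<bar> \<le> 1 + z\<^sup>2 / 2"
    using sum_squares_ge_zero[of "\<bar>z\<bar> - 1" 0] by (simp add: power2_eq_square algebra_simps abs_mult_self_eq)
  also have "\<dots> \<le> exp (z\<^sup>2 / 2)" by (rule exp_ge_add_one_self_aux) simp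
  finally have 1: "\<bar>z\<bar> * exp (- z\<^sup>2 / 2) \<le> 1"
    by (simp add: exp_minus field_simps)
  have 2: "1 / sqrt (2 * pi) \<le> 1" using pi_gt3 by (simp add: divide_le_eq)
  have "\<bar>z * phi z\<bar> = (1 / sqrt (2 * pi)) * (\<bar>z\<bar> * exp (- z\<^sup>2 / 2))"
    by (simp add: std_normal_density_def abs_mult)
  also have "\<dots> \<le> 1 * 1" using 1 2 by (intro mult_mono) auto
  finally show ?thesis by simp
qed

lemma phi_lip: "\<bar>phi a - phi b\<bar> \<le> \<bar>a - b\<bar>"
proof -
  have *: "\<bar>phi v - phi u\<bar> \<le> \<bar>v - u\<bar>" if uv: "u < v" for u v
  proof -
    obtain z where z: "u < z" "z < v" "phi v - phi u = (v - u) * (- z * phi z)"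
      using MVT2[OF uv, of phi "\<lambda>z. - z * phi z"] phi_deriv by blast
    have "\<bar>phi v - phi u\<bar> = \<bar>v - u\<bar> * \<bar>z * phi z\<bar>" using z by (simp add: abs_mult)
    also have "\<dots> \<le> \<bar>v - u\<bar> * 1" by (intro mult_left_mono z_phi_bound) auto
    finally show ?thesis by simp
  qed
  show ?thesis
    using *[of a b] *[of b a] by (cases a b rule: linorder_cases) (auto simp: abs_minus_commute)
qed



locale tw = prob_space M for M :: "'a measure" +
  fixes X N :: "'a \<Rightarrow> real"
  assumes Xm[measurable]: "X \<in> borel_measurable M" and Xi: "integrable M X"
    and Nd: "distributed M lborel N std_normal_density"
    and ind: "indep_var borel X borel N"
begin

definition "P = distr M borel X"

lemma Nm[measurable]: "N \<in> borel_measurable M"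
  using Nd by (auto simp: distributed_def)

lemma P_prob: "prob_space P" unfolding P_def by (rule prob_space_distr) simp


lemma sets_P[measurable_cong]: "sets P = sets borel" unfolding P_def by simp

lemma distrN: "distr M borel N = density lborel (\<lambda>x. ennreal (std_normal_density x))"
proof -
  have "distr M borel N = distr M lborel N" by (rule distr_cong) auto
  also have "\<dots> = density lborel (\<lambda>x. ennreal (std_normal_density x))"
    using Nd by (simp add: distributed_def)
  finally show ?thesis .
qed

lemma joint: "distr M (borel \<Otimes>\<^sub>M borel) (\<lambda>\<omega>. (X \<omega>, N \<omega>)) = P \<Otimes>\<^sub>M density lborel (\<lambda>x. ennreal (std_normal_density x))"
  using ind unfolding indep_var_distribution_eq P_def distrN by simp

lemma nn_key:
  fixes f :: "real \<times> real \<Rightarrow> ennreal"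
  assumes f[measurable]: "f \<in> borel_measurable (borel \<Otimes>\<^sub>M borel)"
  shows "(\<integral>\<^sup>+\<omega>. f (X \<omega>, X \<omega> + N \<omega>) \<partial>M) =
     (\<integral>\<^sup>+y. (\<integral>\<^sup>+x. ennreal (std_normal_density (y - x)) * f (x, y) \<partial>P) \<partial>lborel)"
proof -
  interpret Pp: prob_space P by (rule P_prob)
  interpret Phi: prob_space "density lborel (\<lambda>x. ennreal (std_normal_density x))"
    by (rule prob_space_normal_density) simp
  interpret PL: pair_sigma_finite P lborel
    by unfold_locales
  have "(\<integral>\<^sup>+\<omega>. f (X \<omega>, X \<omega> + N \<omega>) \<partial>M) = 
     (\<integral>\<^sup>+z. f (fst z, fst z + snd z) \<partial>distr M (borel \<Otimes>\<^sub>M borel) (\<lambda>\<omega>. (X \<omega>, N \<omega>)))"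
    by (subst nn_integral_distr) auto
  also have "\<dots> = (\<integral>\<^sup>+z. f (fst z, fst z + snd z) \<partial>(P \<Otimes>\<^sub>M density lborel (\<lambda>x. ennreal (std_normal_density x))))"
    by (simp add: joint)
  also have "\<dots> = (\<integral>\<^sup>+x. \<integral>\<^sup>+n. f (x, x + n) \<partial>density lborel (\<lambda>x. ennreal (std_normal_density x)) \<partial>P)"
    by (subst Phi.nn_integral_fst[symmetric]) auto
  also have "\<dots> = (\<integral>\<^sup>+x. \<integral>\<^sup>+n. ennreal (std_normal_density n) * f (x, x + n) \<partial>lborel \<partial>P)"
    by (subst nn_integral_density) auto
  also have "\<dots> = (\<integral>\<^sup>+x. \<integral>\<^sup>+y. ennreal (std_normal_density (y - x)) * f (x, y) \<partial>lborel \<partial>P)"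
  proof (rule nn_integral_cong)
    fix x
    show "(\<integral>\<^sup>+n. ennreal (std_normal_density n) * f (x, x + n) \<partial>lborel) = (\<integral>\<^sup>+y. ennreal (std_normal_density (y - x)) * f (x, y) \<partial>lborel)"
      using nn_integral_real_affine[where c=1 and t=x and f="\<lambda>y. ennreal (std_normal_density (y - x)) * f (x, y)"]
      by simp
  qed
  also have "\<dots> = (\<integral>\<^sup>+y. (\<integral>\<^sup>+x. ennreal (std_normal_density (y - x)) * f (x, y) \<partial>P) \<partial>lborel)"
    using PL.Fubini[of "\<lambda>z. ennreal (std_normal_density (snd z - fst z)) * f z"] by simp
  finally show ?thesis .
qed


definition "pY y = (\<integral>x. phi (y - x) \<partial>P)"
definition "G g y = (\<integral>x. g x * phi (y - x) \<partial>P)"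

lemma phi_pos: "phi z > 0" by (simp add: normal_density_pos)

lemma phi_le1: "phi z \<le> 1"
proof -
  have "exp (- z\<^sup>2 / 2) \<le> 1" by simp
  moreover have "1 / sqrt (2 * pi) \<le> 1" using pi_gt3 by (simp add: divide_le_eq)
  ultimately have "(1 / sqrt (2 * pi)) * exp (- z\<^sup>2 / 2) \<le> 1 * 1"
    by (intro mult_mono) auto
  then show ?thesis unfolding std_normal_density_def by simp
qed

lemma int_phi: "integrable P (\<lambda>x. phi (y - x))"
proof -
  interpret PP: prob_space P by (rule P_prob)
  show ?thesis by (rule PP.integrable_const_bound[where B=1]) (auto simp: phi_le1 less_imp_le[OF phi_pos])
qed

lemma intP_abs: "integrable P (\<lambda>x. \<bar>x\<bar>)"
  unfolding P_def using Xi by (subst integrable_distr_eq) auto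

lemma int_g_phi:
  assumes [measurable]: "g \<in> borel_measurable borel" and gb: "\<And>x. \<bar>g x\<bar> \<le> \<bar>x\<bar>"
  shows "integrable P (\<lambda>x. g x * phi (y - x))"
proof (rule Bochner_Integration.integrable_bound[OF intP_abs])
  show "AE x in P. norm (g x * phi (y - x)) \<le> norm \<bar>x\<bar>"
  proof (rule AE_I2)
    fix x
    have "\<bar>g x\<bar> * phi (y - x) \<le> \<bar>x\<bar> * 1"
      by (rule mult_mono[OF gb phi_le1]) (simp_all add: less_imp_le[OF phi_pos])
    then show "norm (g x * phi (y - x)) \<le> norm \<bar>x\<bar>"
      using phi_pos[of "y - x"] by (simp add: abs_mult)
  qed
  show "(\<lambda>x. g x * phi (y - x)) \<in> borel_measurable P" by measurable
qed

lemma pY_meas[measurable]: "pY \<in> borel_measurable borel"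
proof -
  interpret PP: prob_space P by (rule P_prob)
  show ?thesis unfolding pY_def by (rule PP.borel_measurable_lebesgue_integral) measurable
qed

lemma pY_nonneg: "pY y \<ge> 0"
  unfolding pY_def by (auto intro!: integral_nonneg_AE simp: less_imp_le[OF phi_pos])

lemma distr_Y: "distr M lborel (\<lambda>\<omega>. X \<omega> + N \<omega>) = density lborel (\<lambda>y. ennreal (pY y))"
proof (rule measure_eqI)
  fix A assume A: "A \<in> sets (distr M lborel (\<lambda>\<omega>. X \<omega> + N \<omega>))"
  then have [measurable]: "A \<in> sets borel" by simp
  have "emeasure (distr M lborel (\<lambda>\<omega>. X \<omega> + N \<omega>)) A = (\<integral>\<^sup>+\<omega>. indicator A (X \<omega> + N \<omega>) \<partial>M)"
  proof -
    have "emeasure (distr M lborel (\<lambda>\<omega>. X \<omega> + N \<omega>)) A = emeasure M ((\<lambda>\<omega>. X \<omega> + N \<omega>) -` A \<inter> space M)"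
      by (rule emeasure_distr) measurable
    also have "\<dots> = (\<integral>\<^sup>+\<omega>. indicator ((\<lambda>\<omega>. X \<omega> + N \<omega>) -` A \<inter> space M) \<omega> \<partial>M)"
      by (rule nn_integral_indicator[symmetric]) measurable
    also have "\<dots> = (\<integral>\<^sup>+\<omega>. indicator A (X \<omega> + N \<omega>) \<partial>M)"
      by (rule nn_integral_cong) (simp split: split_indicator)
    finally show ?thesis .
  qed
  also have "\<dots> = (\<integral>\<^sup>+y. (\<integral>\<^sup>+x. ennreal (phi (y - x)) * indicator A y \<partial>P) \<partial>lborel)"
    using nn_key[of "\<lambda>z. indicator A (snd z)"] by (simp only: fst_conv snd_conv) measurable
  also have "\<dots> = (\<integral>\<^sup>+y. ennreal (pY y) * indicator A y \<partial>lborel)"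
  proof (rule nn_integral_cong)
    fix y
    have "(\<integral>\<^sup>+x. ennreal (phi (y - x)) * indicator A y \<partial>P) = (\<integral>\<^sup>+x. ennreal (phi (y - x)) \<partial>P) * indicator A y"
      by (rule nn_integral_multc) auto
    also have "(\<integral>\<^sup>+x. ennreal (phi (y - x)) \<partial>P) = ennreal (pY y)"
      unfolding pY_def by (rule nn_integral_eq_integral[OF int_phi]) (auto simp: less_imp_le[OF phi_pos])
    finally show "(\<integral>\<^sup>+x. ennreal (phi (y - x)) * indicator A y \<partial>P) = ennreal (pY y) * indicator A y" .
  qed
  also have "\<dots> = emeasure (density lborel (\<lambda>y. ennreal (pY y))) A"
    by (subst emeasure_density) auto
  finally show "emeasure (distr M lborel (\<lambda>\<omega>. X \<omega> + N \<omega>)) A = emeasure (density lborel (\<lambda>y. ennreal (pY y))) A" .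
qed simp

lemma G_meas[measurable]: 
  assumes [measurable]: "g \<in> borel_measurable borel"
  shows "G g \<in> borel_measurable borel"
proof -
  interpret PP: prob_space P by (rule P_prob)
  show ?thesis unfolding G_def by (rule PP.borel_measurable_lebesgue_integral) measurable
qed

lemma key_g:
  assumes [measurable]: "g \<in> borel_measurable borel" and gb: "\<And>x. \<bar>g x\<bar> \<le> \<bar>x\<bar>" and g0: "\<And>x. g x \<ge> 0"
    and [measurable]: "B \<in> sets borel"
  shows "integrable lborel (\<lambda>y. indicator B y * G g y)"
    "(\<integral>\<omega>. indicator B (X \<omega> + N \<omega>) * g (X \<omega>) \<partial>M) = (\<integral>y. indicator B y * G g y \<partial>lborel)"
proof -
  have G0: "G g y \<ge> 0" for y
    unfolding G_def by (auto intro!: integral_nonneg_AE mult_nonneg_nonneg g0 simp: less_imp_le[OF phi_pos])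
  have eq: "(\<integral>\<^sup>+\<omega>. ennreal (indicator B (X \<omega> + N \<omega>) * g (X \<omega>)) \<partial>M) = (\<integral>\<^sup>+y. ennreal (indicator B y * G g y) \<partial>lborel)"
  proof -
    have "(\<integral>\<^sup>+\<omega>. ennreal (indicator B (X \<omega> + N \<omega>) * g (X \<omega>)) \<partial>M) =
       (\<integral>\<^sup>+y. (\<integral>\<^sup>+x. ennreal (phi (y - x)) * ennreal (indicator B y * g x) \<partial>P) \<partial>lborel)"
      using nn_key[of "\<lambda>z. ennreal (indicator B (snd z) * g (fst z))"] by (simp only: fst_conv snd_conv) measurable
    also have "\<dots> = (\<integral>\<^sup>+y. ennreal (indicator B y * G g y) \<partial>lborel)"
    proof (rule nn_integral_cong)
      fix y
      have "(\<integral>\<^sup>+x. ennreal (phi (y - x)) * ennreal (indicator B y * g x) \<partial>P) = 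
          (\<integral>\<^sup>+x. ennreal (indicator B y * (g x * phi (y - x))) \<partial>P)"
        by (intro nn_integral_cong) (auto simp: ennreal_mult'[symmetric] less_imp_le[OF phi_pos] g0 mult_ac)
      also have "\<dots> = ennreal (\<integral>x. indicator B y * (g x * phi (y - x)) \<partial>P)"
        by (rule nn_integral_eq_integral) (auto intro!: int_g_phi gb g0 mult_nonneg_nonneg simp: less_imp_le[OF phi_pos])
      also have "\<dots> = ennreal (indicator B y * G g y)"
        unfolding G_def by simp
      finally show "(\<integral>\<^sup>+x. ennreal (phi (y - x)) * ennreal (indicator B y * g x) \<partial>P) = ennreal (indicator B y * G g y)" .
    qed
    finally show ?thesis .
  qed
  have intM: "integrable M (\<lambda>\<omega>. indicator B (X \<omega> + N \<omega>) * g (X \<omega>))"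
    by (rule Bochner_Integration.integrable_bound[OF integrable_abs[OF Xi]])
       (auto simp: gb indicator_def)
  have fin: "(\<integral>\<^sup>+\<omega>. ennreal (indicator B (X \<omega> + N \<omega>) * g (X \<omega>)) \<partial>M) < \<infinity>"
  proof -
    have "(\<integral>\<^sup>+\<omega>. ennreal (indicator B (X \<omega> + N \<omega>) * g (X \<omega>)) \<partial>M) = (\<integral>\<^sup>+\<omega>. ennreal \<bar>indicator B (X \<omega> + N \<omega>) * g (X \<omega>)\<bar> \<partial>M)"
      by (intro nn_integral_cong) (auto simp: g0)
    then show ?thesis using intM by (simp add: integrable_iff_bounded)
  qed
  show int: "integrable lborel (\<lambda>y. indicator B y * G g y)"
  proof (rule integrableI_nonneg)
    show "(\<lambda>y. indicator B y * G g y) \<in> borel_measurable lborel" by measurable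
    show "AE y in lborel. 0 \<le> indicator B y * G g y" by (intro AE_I2) (simp add: G0)
    show "(\<integral>\<^sup>+y. ennreal (indicator B y * G g y) \<partial>lborel) < \<infinity>" using fin unfolding eq .
  qed
  show "(\<integral>\<omega>. indicator B (X \<omega> + N \<omega>) * g (X \<omega>) \<partial>M) = (\<integral>y. indicator B y * G g y \<partial>lborel)"
  proof -
    have "(\<integral>\<omega>. indicator B (X \<omega> + N \<omega>) * g (X \<omega>) \<partial>M) = enn2real (\<integral>\<^sup>+\<omega>. ennreal (indicator B (X \<omega> + N \<omega>) * g (X \<omega>)) \<partial>M)"
      by (rule integral_eq_nn_integral) (measurable, intro AE_I2, simp add: g0)
    also have "\<dots> = enn2real (\<integral>\<^sup>+y. ennreal (indicator B y * G g y) \<partial>lborel)" by (simp only: eq)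
    also have "\<dots> = (\<integral>y. indicator B y * G g y \<partial>lborel)"
      by (rule integral_eq_nn_integral[symmetric]) (measurable, intro AE_I2, simp add: G0)
    finally show ?thesis .
  qed
qed


definition "hY y = (\<integral>x. x * phi (y - x) \<partial>P)"

lemma int_ind_g:
  assumes [measurable]: "g \<in> borel_measurable borel" and gb: "\<And>x. \<bar>g x\<bar> \<le> \<bar>x\<bar>" and [measurable]: "B \<in> sets borel"
  shows "integrable M (\<lambda>\<omega>. indicator B (X \<omega> + N \<omega>) * g (X \<omega>))"
proof (rule Bochner_Integration.integrable_bound[OF integrable_abs[OF Xi]])
  show "(\<lambda>\<omega>. indicator B (X \<omega> + N \<omega>) * g (X \<omega>)) \<in> borel_measurable M" by measurable
  show "AE \<omega> in M. norm (indicator B (X \<omega> + N \<omega>) * g (X \<omega>)) \<le> norm \<bar>X \<omega>\<bar>"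
  proof (rule AE_I2)
    fix \<omega>
    have "\<bar>indicator B (X \<omega> + N \<omega>) * g (X \<omega>)\<bar> \<le> \<bar>g (X \<omega>)\<bar>"
      by (simp add: indicator_def)
    also have "\<dots> \<le> \<bar>X \<omega>\<bar>" by (rule gb)
    finally show "norm (indicator B (X \<omega> + N \<omega>) * g (X \<omega>)) \<le> norm \<bar>X \<omega>\<bar>" by simp
  qed
qed

lemma hY_split: "hY y = G (\<lambda>x. max x 0) y - G (\<lambda>x. max (-x) 0) y"
proof -
  have i1: "integrable P (\<lambda>x. max x 0 * phi (y - x))" by (rule int_g_phi) auto
  have i2: "integrable P (\<lambda>x. max (-x) 0 * phi (y - x))" by (rule int_g_phi) auto
  have "hY y = (\<integral>x. max x 0 * phi (y - x) - max (-x) 0 * phi (y - x) \<partial>P)"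
    unfolding hY_def by (rule Bochner_Integration.integral_cong) (auto simp: max_def algebra_simps)
  also have "\<dots> = G (\<lambda>x. max x 0) y - G (\<lambda>x. max (-x) 0) y"
    unfolding G_def by (rule Bochner_Integration.integral_diff[OF i1 i2])
  finally show ?thesis .
qed

lemma key_X:
  assumes [measurable]: "B \<in> sets borel"
  shows "integrable lborel (\<lambda>y. indicator B y * hY y)"
    "(\<integral>\<omega>. indicator B (X \<omega> + N \<omega>) * X \<omega> \<partial>M) = (\<integral>y. indicator B y * hY y \<partial>lborel)"
proof -
  have m1[measurable]: "(\<lambda>x::real. max x 0) \<in> borel_measurable borel" by measurable
  have m2[measurable]: "(\<lambda>x::real. max (-x) 0) \<in> borel_measurable borel" by measurable
  have b1: "\<And>x::real. \<bar>max x 0\<bar> \<le> \<bar>x\<bar>" and b2: "\<And>x::real. \<bar>max (-x) 0\<bar> \<le> \<bar>x\<bar>" by auto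
  have p1: "\<And>x::real. max x 0 \<ge> 0" and p2: "\<And>x::real. max (-x) 0 \<ge> 0" by auto
  note k1 = key_g[OF m1 b1 p1 assms] and k2 = key_g[OF m2 b2 p2 assms]
  have e: "(\<lambda>y. indicator B y * hY y) = (\<lambda>y. indicator B y * G (\<lambda>x. max x 0) y - indicator B y * G (\<lambda>x. max (-x) 0) y)"
    by (simp add: hY_split algebra_simps)
  show "integrable lborel (\<lambda>y. indicator B y * hY y)"
    unfolding e by (intro Bochner_Integration.integrable_diff k1(1) k2(1))
  have "(\<integral>\<omega>. indicator B (X \<omega> + N \<omega>) * X \<omega> \<partial>M) = 
     (\<integral>\<omega>. indicator B (X \<omega> + N \<omega>) * max (X \<omega>) 0 - indicator B (X \<omega> + N \<omega>) * max (- X \<omega>) 0 \<partial>M)"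
    by (rule Bochner_Integration.integral_cong) (auto simp: max_def algebra_simps)
  also have "\<dots> = (\<integral>\<omega>. indicator B (X \<omega> + N \<omega>) * max (X \<omega>) 0 \<partial>M) - (\<integral>\<omega>. indicator B (X \<omega> + N \<omega>) * max (- X \<omega>) 0 \<partial>M)"
    by (rule Bochner_Integration.integral_diff[OF int_ind_g[OF m1 b1 assms] int_ind_g[OF m2 b2 assms]])
  also have "\<dots> = (\<integral>y. indicator B y * G (\<lambda>x. max x 0) y \<partial>lborel) - (\<integral>y. indicator B y * G (\<lambda>x. max (-x) 0) y \<partial>lborel)"
    using k1(2) k2(2) by simp
  also have "\<dots> = (\<integral>y. indicator B y * hY y \<partial>lborel)"
    unfolding e by (rule Bochner_Integration.integral_diff[symmetric, OF k1(1) k2(1)])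
  finally show "(\<integral>\<omega>. indicator B (X \<omega> + N \<omega>) * X \<omega> \<partial>M) = (\<integral>y. indicator B y * hY y \<partial>lborel)" .
qed

lemma hY_int: "integrable lborel hY"
  using key_X(1)[of UNIV] by simp

lemma hY_meas[measurable]: "hY \<in> borel_measurable borel"
proof -
  interpret PP: prob_space P by (rule P_prob)
  show ?thesis unfolding hY_def by (rule PP.borel_measurable_lebesgue_integral) measurable
qed

lemma pY_le1: "pY y \<le> 1"
proof -
  interpret PP: prob_space P by (rule P_prob)
  have "pY y \<le> (\<integral>x. 1 \<partial>P)"
    unfolding pY_def by (rule Bochner_Integration.integral_mono[OF int_phi]) (auto simp: phi_le1)
  also have "\<dots> = 1" by (simp add: PP.prob_space)
  finally show ?thesis .
qed

lemma phi_mono: "\<bar>a\<bar> \<le> \<bar>b\<bar> \<Longrightarrow> phi b \<le> phi a"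
proof -
  assume "\<bar>a\<bar> \<le> \<bar>b\<bar>"
  then have "a\<^sup>2 \<le> b\<^sup>2" by (metis abs_le_square_iff)
  then show "phi b \<le> phi a" unfolding std_normal_density_def by (auto intro!: divide_right_mono)
qed

lemma pY_lower: "\<exists>R>0. \<forall>y. phi (\<bar>y\<bar> + R) / 2 \<le> pY y"
proof -
  interpret PP: prob_space P by (rule P_prob)
  define E where "E = (\<integral>x. \<bar>x\<bar> \<partial>P)"
  have E0: "E \<ge> 0" unfolding E_def by simp
  define R where "R = 2 * E + 1"
  have R0: "R > 0" using E0 by (simp add: R_def)
  have "measure P {x \<in> space P. \<bar>x\<bar> \<ge> R} \<le> E / R"
    unfolding E_def by (rule integral_Markov_inequality_measure[OF intP_abs _ _ R0, where A="space P"]) auto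
  also have "\<dots> \<le> 1 / 2" using E0 R0 by (simp add: R_def field_simps)
  finally have m1: "measure P {x \<in> space P. \<bar>x\<bar> \<ge> R} \<le> 1 / 2" .
  have "measure P {x \<in> space P. \<bar>x\<bar> < R} = 1 - measure P {x \<in> space P. \<bar>x\<bar> \<ge> R}"
  proof -
    have "space P - {x \<in> space P. \<bar>x\<bar> \<ge> R} = {x \<in> space P. \<bar>x\<bar> < R}" by auto
    moreover have "{x \<in> space P. \<bar>x\<bar> \<ge> R} \<in> sets P" by measurable
    ultimately show ?thesis using PP.prob_compl[of "{x \<in> space P. \<bar>x\<bar> \<ge> R}"] by simp
  qed
  with m1 have m2: "measure P {x \<in> space P. \<bar>x\<bar> < R} \<ge> 1 / 2" by simp
  show ?thesis
  proof (intro exI[of _ R] conjI allI R0)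
    fix y
    have "phi (\<bar>y\<bar> + R) / 2 \<le> phi (\<bar>y\<bar> + R) * measure P {x \<in> space P. \<bar>x\<bar> < R}"
      using m2 phi_pos[of "\<bar>y\<bar> + R"] by (simp add: field_simps)
    also have "\<dots> = (\<integral>x. indicator {x \<in> space P. \<bar>x\<bar> < R} x * phi (\<bar>y\<bar> + R) \<partial>P)"
      by (simp add: mult.commute)
    also have "\<dots> \<le> pY y"
      unfolding pY_def
    proof (rule Bochner_Integration.integral_mono[OF _ int_phi])
      show "integrable P (\<lambda>x. indicator {x \<in> space P. \<bar>x\<bar> < R} x * phi (\<bar>y\<bar> + R))"
        by (rule PP.integrable_const_bound[where B=1]) (auto simp: indicator_def phi_le1 less_imp_le[OF phi_pos])
      fix x assume "x \<in> space P"
      show "indicator {x \<in> space P. \<bar>x\<bar> < R} x * phi (\<bar>y\<bar> + R) \<le> phi (y - x)"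
      proof (cases "\<bar>x\<bar> < R")
        case True
        then have "\<bar>y - x\<bar> \<le> \<bar>\<bar>y\<bar> + R\<bar>" by auto
        then show ?thesis using True \<open>x \<in> space P\<close> by (simp add: phi_mono)
      next
        case False
        then show ?thesis by (simp add: less_imp_le[OF phi_pos])
      qed
    qed
    finally show "phi (\<bar>y\<bar> + R) / 2 \<le> pY y" .
  qed
qed

lemma pY_pos: "pY y > 0"
proof -
  obtain R where "\<forall>y. phi (\<bar>y\<bar> + R) / 2 \<le> pY y" using pY_lower by blast
  then show ?thesis using phi_pos[of "\<bar>y\<bar> + R"] by (smt (verit) field_sum_of_halves)
qed

lemma condexp:
  "AE \<omega> in M. real_cond_exp M (vimage_algebra (space M) (\<lambda>\<omega>. X \<omega> + N \<omega>) borel) X \<omega>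
      = hY (X \<omega> + N \<omega>) / pY (X \<omega> + N \<omega>)"
proof -
  define F where "F = vimage_algebra (space M) (\<lambda>\<omega>. X \<omega> + N \<omega>) borel"
  have Yf: "(\<lambda>\<omega>. X \<omega> + N \<omega>) \<in> space M \<rightarrow> space borel" by simp
  have sF: "sets F = {(\<lambda>\<omega>. X \<omega> + N \<omega>) -` A \<inter> space M | A. A \<in> sets borel}"
    unfolding F_def by (rule sets_vimage_algebra2[OF Yf])
  have sub: "subalgebra M F"
    unfolding subalgebra_def
  proof
    show "sets F \<subseteq> sets M" unfolding sF by auto
    show "space F = space M" by (simp add: F_def)
  qed
  interpret S: finite_measure_subalgebra M F
    by unfold_locales (rule sub)
  define r where "r y = hY y / pY y" for y
  have rm[measurable]: "r \<in> borel_measurable borel" unfolding r_def by measurable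
  have YF: "(\<lambda>\<omega>. X \<omega> + N \<omega>) \<in> measurable F borel"
    unfolding F_def by (rule measurable_vimage_algebra1[OF Yf])
  have pr: "pY y * r y = hY y" for y using pY_pos[of y] by (simp add: r_def)
  have intr: "integrable M (\<lambda>\<omega>. r (X \<omega> + N \<omega>))"
  proof -
    have "integrable (density lborel (\<lambda>y. ennreal (pY y))) r"
      by (subst integrable_density) (auto simp: pY_nonneg pr hY_int)
    then have "integrable (distr M lborel (\<lambda>\<omega>. X \<omega> + N \<omega>)) r" by (simp add: distr_Y)
    then show ?thesis by (subst (asm) integrable_distr_eq) auto
  qed
  have "AE \<omega> in M. real_cond_exp M F X \<omega> = r (X \<omega> + N \<omega>)"
  proof (rule S.real_cond_exp_charact)
    fix A assume "A \<in> sets F"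
    then obtain B where B[measurable]: "B \<in> sets borel" and A: "A = (\<lambda>\<omega>. X \<omega> + N \<omega>) -` B \<inter> space M"
      unfolding sF by auto
    have "(\<integral>\<omega>\<in>A. X \<omega> \<partial>M) = (\<integral>\<omega>. indicator B (X \<omega> + N \<omega>) * X \<omega> \<partial>M)"
      unfolding set_lebesgue_integral_def A
      by (rule Bochner_Integration.integral_cong) (auto simp: indicator_def)
    also have "\<dots> = (\<integral>y. indicator B y * hY y \<partial>lborel)" by (rule key_X(2)[OF B])
    also have "\<dots> = (\<integral>y. pY y *\<^sub>R (indicator B y * r y) \<partial>lborel)"
      by (rule Bochner_Integration.integral_cong) (auto simp: pr[symmetric] algebra_simps)
    also have "\<dots> = (\<integral>y. indicator B y * r y \<partial>density lborel (\<lambda>y. ennreal (pY y)))"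
      by (rule integral_density[symmetric]) (auto simp: pY_nonneg)
    also have "\<dots> = (\<integral>y. indicator B y * r y \<partial>distr M lborel (\<lambda>\<omega>. X \<omega> + N \<omega>))"
      by (simp add: distr_Y)
    also have "\<dots> = (\<integral>\<omega>. indicator B (X \<omega> + N \<omega>) * r (X \<omega> + N \<omega>) \<partial>M)"
      by (rule integral_distr) auto
    also have "\<dots> = (\<integral>\<omega>\<in>A. r (X \<omega> + N \<omega>) \<partial>M)"
      unfolding set_lebesgue_integral_def A
      by (rule Bochner_Integration.integral_cong) (auto simp: indicator_def)
    finally show "(\<integral>\<omega>\<in>A. X \<omega> \<partial>M) = (\<integral>\<omega>\<in>A. r (X \<omega> + N \<omega>) \<partial>M)" .
  next
    show "integrable M X" by (rule Xi)
    show "integrable M (\<lambda>\<omega>. r (X \<omega> + N \<omega>))" by (rule intr)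
    show "(\<lambda>\<omega>. r (X \<omega> + N \<omega>)) \<in> borel_measurable F"
      using measurable_comp[OF YF rm] by (simp add: comp_def)
  qed
  then show ?thesis unfolding F_def r_def .
qed

lemma pY_deriv: "(pY has_real_derivative (hY y - y * pY y)) (at y)"
  unfolding has_field_derivative_iff tendsto_at_iff_sequentially
proof (intro allI impI)
  interpret PP: prob_space P by (rule P_prob)
  fix s :: "nat \<Rightarrow> real" assume sne: "\<forall>i. s i \<in> UNIV - {y}" and sl: "s \<longlonglongrightarrow> y"
  have q: "(pY (s n) - pY y) / (s n - y) = (\<integral>x. (phi (s n - x) - phi (y - x)) / (s n - y) \<partial>P)" for n
    unfolding pY_def
    by (simp add: Bochner_Integration.integral_diff[OF int_phi int_phi])
  have lim: "(\<lambda>n. \<integral>x. (phi (s n - x) - phi (y - x)) / (s n - y) \<partial>P) \<longlonglongrightarrow> (\<integral>x. - (y - x) * phi (y - x) \<partial>P)"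
  proof (rule integral_dominated_convergence[where w="\<lambda>_. 1"])
    show "(\<lambda>x. - (y - x) * phi (y - x)) \<in> borel_measurable P" by measurable
    show "\<And>n. (\<lambda>x. (phi (s n - x) - phi (y - x)) / (s n - y)) \<in> borel_measurable P" by measurable
    show "integrable P (\<lambda>_. 1::real)" by simp
    show "AE x in P. (\<lambda>n. (phi (s n - x) - phi (y - x)) / (s n - y)) \<longlonglongrightarrow> - (y - x) * phi (y - x)"
    proof (rule AE_I2)
      fix x
      have d: "((\<lambda>z. (phi z - phi (y - x)) / (z - (y - x))) \<longlongrightarrow> - (y - x) * phi (y - x)) (at (y - x))"
        using phi_deriv[of "y - x"] unfolding has_field_derivative_iff .
      have "((\<lambda>z. (phi z - phi (y - x)) / (z - (y - x))) \<circ> (\<lambda>n. s n - x)) \<longlonglongrightarrow> - (y - x) * phi (y - x)"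
      proof -
        have c1: "(\<lambda>n. s n - x) \<longlonglongrightarrow> y - x" by (intro tendsto_diff sl tendsto_const)
        have c2: "\<And>i. (\<lambda>n. s n - x) i \<in> UNIV - {y - x}" using sne by auto
        show ?thesis using d[unfolded tendsto_at_iff_sequentially, rule_format, OF c2 c1] .
      qed
      then show "(\<lambda>n. (phi (s n - x) - phi (y - x)) / (s n - y)) \<longlonglongrightarrow> - (y - x) * phi (y - x)"
        by (simp add: comp_def)
    qed
    show "AE x in P. norm ((phi (s n - x) - phi (y - x)) / (s n - y)) \<le> 1" for n
    proof (rule AE_I2)
      fix x
      have ne: "s n - y \<noteq> 0" using sne by auto
      have "\<bar>phi (s n - x) - phi (y - x)\<bar> \<le> \<bar>s n - y\<bar>" using phi_lip[of "s n - x" "y - x"] by simp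
      then show "norm ((phi (s n - x) - phi (y - x)) / (s n - y)) \<le> 1"
        using ne by (simp add: abs_divide divide_le_eq_1)
    qed
  qed
  have "(\<integral>x. - (y - x) * phi (y - x) \<partial>P) = (\<integral>x. x * phi (y - x) - y * phi (y - x) \<partial>P)"
    by (rule Bochner_Integration.integral_cong) (auto simp: algebra_simps)
  also have "\<dots> = hY y - y * pY y"
    unfolding hY_def pY_def
    by (subst Bochner_Integration.integral_diff) (auto intro!: int_g_phi[where g="\<lambda>x. x"] int_phi)
  finally have fe: "(\<integral>x. - (y - x) * phi (y - x) \<partial>P) = hY y - y * pY y" .
  have E: "((\<lambda>t. (pY t - pY y) / (t - y)) \<circ> s) = (\<lambda>n. \<integral>x. (phi (s n - x) - phi (y - x)) / (s n - y) \<partial>P)"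
    by (rule ext) (simp only: comp_def q)
  show "((\<lambda>t. (pY t - pY y) / (t - y)) \<circ> s) \<longlonglongrightarrow> hY y - y * pY y"
    unfolding E using lim unfolding fe .
qed

lemma pY_cont: "isCont pY y"
  using pY_deriv by (rule DERIV_isCont)

lemma hY_cont: "isCont hY y"
  unfolding continuous_at_sequentially
proof (intro allI impI)
  interpret PP: prob_space P by (rule P_prob)
  fix s :: "nat \<Rightarrow> real" assume sl: "s \<longlonglongrightarrow> y"
  have "(\<lambda>n. \<integral>x. x * phi (s n - x) \<partial>P) \<longlonglongrightarrow> (\<integral>x. x * phi (y - x) \<partial>P)"
  proof (rule integral_dominated_convergence[where w="\<lambda>x. \<bar>x\<bar>"])
    show "(\<lambda>x. x * phi (y - x)) \<in> borel_measurable P" by measurable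
    show "\<And>n. (\<lambda>x. x * phi (s n - x)) \<in> borel_measurable P" by measurable
    show "integrable P (\<lambda>x. \<bar>x\<bar>)" by (rule intP_abs)
    show "AE x in P. (\<lambda>n. x * phi (s n - x)) \<longlonglongrightarrow> x * phi (y - x)"
    proof (rule AE_I2)
      fix x
      have c: "isCont phi (y - x)" using phi_deriv by (rule DERIV_isCont)
      have "(\<lambda>n. phi (s n - x)) \<longlonglongrightarrow> phi (y - x)"
        by (rule isCont_tendsto_compose[OF c]) (intro tendsto_diff sl tendsto_const)
      then show "(\<lambda>n. x * phi (s n - x)) \<longlonglongrightarrow> x * phi (y - x)" by (intro tendsto_mult tendsto_const)
    qed
    show "AE x in P. norm (x * phi (s n - x)) \<le> \<bar>x\<bar>" for n
    proof (rule AE_I2)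
      fix x
      have "\<bar>x\<bar> * phi (s n - x) \<le> \<bar>x\<bar> * 1" by (intro mult_left_mono phi_le1) auto
      then show "norm (x * phi (s n - x)) \<le> \<bar>x\<bar>" using phi_pos[of "s n - x"] by (simp add: abs_mult)
    qed
  qed
  then show "(hY \<circ> s) \<longlonglongrightarrow> hY y" by (simp add: comp_def hY_def)
qed

end



lemma grow:
  fixes L L' :: "real \<Rightarrow> real"
  assumes d: "\<And>y. (L has_real_derivative L' y) (at y)" and b: "\<And>y. y \<ge> y0 \<Longrightarrow> L' y \<ge> \<epsilon>" and e: "\<epsilon> > 0"
  shows "\<exists>y\<ge>y0. L y > B"
proof -
  define y1 where "y1 = y0 + \<bar>B - L y0\<bar> / \<epsilon> + 1"
  have lt: "y0 < y1" using e by (simp add: y1_def add_nonneg_pos)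
  obtain z where z: "y0 < z" "z < y1" "L y1 - L y0 = (y1 - y0) * L' z"
    using MVT2[OF lt, of L L'] d by blast
  have "(y1 - y0) * \<epsilon> \<le> (y1 - y0) * L' z"
    using lt z b[of z] by (intro mult_left_mono) auto
  moreover have "(y1 - y0) * \<epsilon> = \<bar>B - L y0\<bar> + \<epsilon>"
    using e by (simp add: y1_def field_simps)
  ultimately have "L y1 - L y0 \<ge> \<bar>B - L y0\<bar> + \<epsilon>" using z by simp
  then have "L y1 > B" using e by linarith
  then show ?thesis using lt by (intro exI[of _ y1]) auto
qed

lemma grow_left:
  fixes L L' :: "real \<Rightarrow> real"
  assumes d: "\<And>y. (L has_real_derivative L' y) (at y)" and b: "\<And>y. y \<le> y0 \<Longrightarrow> L' y \<le> - \<epsilon>" and e: "\<epsilon> > 0"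
  shows "\<exists>y. L y > B"
proof -
  have d': "((\<lambda>y. L (- y)) has_real_derivative - L' (- y)) (at y)" for y
  proof -
    have "((L \<circ> uminus) has_real_derivative L' (- y) * (- 1)) (at y)"
      by (rule DERIV_chain[OF d]) (auto intro!: derivative_eq_intros)
    then show ?thesis by (simp add: comp_def)
  qed
  have "\<exists>y\<ge>- y0. L (- y) > B"
  proof (rule grow[where L="\<lambda>y. L (- y)" and L'="\<lambda>y. - L' (- y)"])
    show "\<And>y. ((\<lambda>y. L (- y)) has_real_derivative - L' (- y)) (at y)" by (rule d')
    fix y assume "- y0 \<le> y"
    then have "- y \<le> y0" by simp
    from b[OF this] show "\<epsilon> \<le> - L' (- y)" by simp
  next
    show "\<epsilon> > 0" by (rule e)
  qed
  then show ?thesis by blast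
qed

lemma eventually_ge_poly:
  fixes g :: "real poly"
  assumes "degree g \<ge> 1" "lead_coeff g > 0"
  shows "\<exists>y0\<ge>0. \<forall>y\<ge>y0. poly g y \<ge> 1"
proof -
  have "eventually (\<lambda>y. poly g y \<ge> 1) at_top"
    using poly_at_top[OF assms] by (simp add: filterlim_at_top)
  moreover have "eventually (\<lambda>y::real. y \<ge> 0) at_top" by simp
  ultimately have "eventually (\<lambda>y. y \<ge> 0 \<and> poly g y \<ge> 1) at_top" by eventually_elim auto
  then obtain y0 where "\<forall>y\<ge>y0. y \<ge> 0 \<and> poly g y \<ge> 1" by (auto simp: eventually_at_top_linorder)
  then show ?thesis by (intro exI[of _ "max y0 0"]) auto
qed

lemma no_deg2:
  fixes L :: "real \<Rightarrow> real" and g :: "real poly"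
  assumes d: "\<And>y. (L has_real_derivative poly g y) (at y)" and up: "\<And>y. L y \<le> 0"
    and low: "\<And>y. L y \<ge> K - (\<bar>y\<bar> + R)\<^sup>2 / 2" and R0: "R \<ge> 0"
  shows "degree g \<le> 1"
proof (rule ccontr)
  assume "\<not> degree g \<le> 1"
  then have dg: "degree g \<ge> 2" by simp
  then have g0: "g \<noteq> 0" by auto
  then have "lead_coeff g \<noteq> 0" by simp
  then consider "lead_coeff g > 0" | "lead_coeff g < 0" by linarith
  then show False
  proof cases
    case 1
    obtain y0 where "\<forall>y\<ge>y0. poly g y \<ge> 1" using eventually_ge_poly[of g] dg 1 by auto
    then obtain y where "L y > 0" using grow[of L "poly g" y0 1 0] d by auto
    then show False using up[of y] by simp
  next
    case 2
    define h where "h = - (g + [:2 * R, 2:])"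
    have dl: "degree [:2 * R, 2:] < degree g" using dg by simp
    have degh: "degree h = degree g" unfolding h_def degree_minus using degree_add_eq_left[OF dl] .
    have la: "lead_coeff (g + [:2*R, 2:]) = lead_coeff g"
      using degree_add_eq_left[OF dl] coeff_eq_0[OF dl] by simp
    have lh: "lead_coeff h = - lead_coeff g"
      unfolding h_def lead_coeff_minus la ..
    obtain y0 where y0: "y0 \<ge> 0" "\<forall>y\<ge>y0. poly h y \<ge> 1"
      using eventually_ge_poly[of h] dg degh lh 2 by auto
    have dF: "((\<lambda>y. - (L y + (y + R)\<^sup>2)) has_real_derivative poly h y) (at y)" for y
      unfolding h_def using d[of y]
      by (auto intro!: derivative_eq_intros simp: algebra_simps power2_eq_square)
    obtain y where y: "y \<ge> y0" "- (L y + (y + R)\<^sup>2) > - K"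
      using grow[of "\<lambda>y. - (L y + (y + R)\<^sup>2)" "poly h" y0 1 "- K"] dF y0 by auto
    have "\<bar>y\<bar> = y" using y y0 by simp
    then have "L y \<ge> K - (y + R)\<^sup>2 / 2" using low[of y] by simp
    with y show False using zero_le_power2[of "y + R"] by linarith
  qed
qed

lemma poly_deg1:
  fixes q :: "real poly"
  assumes "degree q \<le> 1"
  shows "poly q y = coeff q 0 + coeff q 1 * y"
proof -
  have "poly q y = (\<Sum>i\<le>degree q. coeff q i * y ^ i)" by (simp add: poly_altdef)
  also have "\<dots> = (\<Sum>i\<le>1. coeff q i * y ^ i)"
    using assms by (intro sum.mono_neutral_left) (auto simp: coeff_eq_0)
  finally show ?thesis by simp
qed

lemma char_return: "char (return borel m) t = iexp (t * m)"
  unfolding char_def by (subst integral_return) auto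

lemma char_normal:
  assumes s: "s > 0"
  shows "char (density lborel (normal_density m s)) t = iexp (t * m) * exp (- (s * t)\<^sup>2 / 2)"
proof -
  interpret D: prob_space std_normal_distribution by (rule prob_space_normal_density) simp
  have did: "distributed std_normal_distribution lborel (\<lambda>x. x) std_normal_density"
    unfolding distributed_def
  proof (intro conjI)
    show "distr std_normal_distribution lborel (\<lambda>x. x) = std_normal_distribution"
      by (subst distr_cong[of _ std_normal_distribution lborel std_normal_distribution]) auto
  qed auto
  have "distributed std_normal_distribution lborel (\<lambda>x. m + s * x) (normal_density (m + s * 0) (\<bar>s\<bar> * 1))"
    by (rule D.normal_density_affine[OF did]) (use s in auto)
  then have dd: "density lborel (normal_density m s) = distr std_normal_distribution lborel (\<lambda>x. m + s * x)"
    using s by (simp add: distributed_def)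
  have "char (density lborel (normal_density m s)) t = (CLINT x|std_normal_distribution. iexp (t * (m + s * x)))"
    unfolding dd char_def by (subst integral_distr) auto
  also have "\<dots> = (CLINT x|std_normal_distribution. iexp (t * m) * iexp ((t * s) * x))"
    by (rule Bochner_Integration.integral_cong) (auto simp: exp_add[symmetric] algebra_simps)
  also have "\<dots> = iexp (t * m) * char std_normal_distribution (t * s)"
    unfolding char_def by simp
  also have "\<dots> = iexp (t * m) * exp (- (s * t)\<^sup>2 / 2)"
    by (simp add: char_std_normal_distribution mult.commute)
  finally show ?thesis .
qed




context tw begin

lemma hY_poly:
  assumes ae: "AE \<omega> in M. real_cond_exp M (vimage_algebra (space M) (\<lambda>\<omega>. X \<omega> + N \<omega>) borel) X \<omega> = poly q (X \<omega> + N \<omega>)"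
  shows "hY y = poly q y * pY y"
proof -
  have "AE \<omega> in M. poly q (X \<omega> + N \<omega>) = hY (X \<omega> + N \<omega>) / pY (X \<omega> + N \<omega>)"
    using ae condexp by eventually_elim simp
  moreover have pm[measurable]: "poly q \<in> borel_measurable borel"
    by (intro borel_measurable_continuous_onI continuous_at_imp_continuous_on) simp
  moreover have "{x. poly q x = hY x / pY x} \<in> sets borel" by measurable
  ultimately have "AE y in distr M lborel (\<lambda>\<omega>. X \<omega> + N \<omega>). poly q y = hY y / pY y"
    by (subst AE_distr_iff) auto
  then have "AE y in density lborel (\<lambda>y. ennreal (pY y)). poly q y = hY y / pY y"
    unfolding distr_Y .
  then have ae2: "AE y in lborel. poly q y = hY y / pY y"
    by (subst (asm) AE_density) (auto simp: pY_pos)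
  have "poly q y = hY y / pY y"
  proof (rule cont_ae_eq[OF _ _ ae2])
    show "\<And>x. isCont (poly q) x" by simp
    show "\<And>x. isCont (\<lambda>y. hY y / pY y) x"
      using pY_pos by (intro isCont_divide hY_cont pY_cont) (auto simp: less_imp_neq[symmetric])
  qed
  then show ?thesis using pY_pos[of y] by (simp add: field_simps)
qed

lemma L_deriv:
  assumes h: "\<And>y. hY y = poly q y * pY y"
  shows "((\<lambda>y. ln (pY y)) has_real_derivative poly (q - [:0, 1:]) y) (at y)"
proof -
  have eq: "1 / pY y * (hY y - y * pY y) = poly (q - [:0, 1:]) y"
    using pY_pos[of y] h[of y] by (simp add: field_simps)
  show ?thesis
    unfolding eq[symmetric] by (rule DERIV_chain2[OF DERIV_ln_divide[OF pY_pos] pY_deriv])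
qed

lemma L_upper: "ln (pY y) \<le> 0"
  using pY_pos[of y] pY_le1[of y] by simp

lemma L_lower: "\<exists>R>0. \<forall>y. ln (pY y) \<ge> ln (1 / (2 * sqrt (2 * pi))) - (\<bar>y\<bar> + R)\<^sup>2 / 2"
proof -
  obtain R where R: "R > 0" "\<And>y. phi (\<bar>y\<bar> + R) / 2 \<le> pY y" using pY_lower by blast
  show ?thesis
  proof (intro exI[of _ R] conjI allI R(1))
    fix y
    have e: "phi (\<bar>y\<bar> + R) / 2 = (1 / (2 * sqrt (2 * pi))) * exp (- (\<bar>y\<bar> + R)\<^sup>2 / 2)"
      by (simp add: std_normal_density_def)
    have "ln (phi (\<bar>y\<bar> + R) / 2) \<le> ln (pY y)"
      using R(2)[of y] phi_pos[of "\<bar>y\<bar> + R"] by simp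
    also have "ln (phi (\<bar>y\<bar> + R) / 2) = ln (1 / (2 * sqrt (2 * pi))) - (\<bar>y\<bar> + R)\<^sup>2 / 2"
      unfolding e by (subst ln_mult) auto
    finally show "ln (pY y) \<ge> ln (1 / (2 * sqrt (2 * pi))) - (\<bar>y\<bar> + R)\<^sup>2 / 2" by simp
  qed
qed

lemma deg_le1:
  assumes ae: "AE \<omega> in M. real_cond_exp M (vimage_algebra (space M) (\<lambda>\<omega>. X \<omega> + N \<omega>) borel) X \<omega> = poly q (X \<omega> + N \<omega>)"
  shows "degree q \<le> 1"
proof -
  have h: "\<And>y. hY y = poly q y * pY y" using hY_poly[OF ae] .
  obtain R where R: "R > 0" "\<And>y. ln (pY y) \<ge> ln (1 / (2 * sqrt (2 * pi))) - (\<bar>y\<bar> + R)\<^sup>2 / 2"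
    using L_lower by blast
  have d1: "degree (q - [:0, 1:]) \<le> 1"
    by (rule no_deg2[OF L_deriv[OF h] L_upper R(2)]) (use R in simp)
  show ?thesis
  proof (rule ccontr)
    assume "\<not> degree q \<le> 1"
    then have "degree (- [:0, 1:]) < degree q" by simp
    then have "degree (q + - [:0, 1:]) = degree q" by (rule degree_add_eq_left)
    then have "degree (q - [:0, 1:]) = degree q" by (simp only: diff_conv_add_uminus)
    with d1 \<open>\<not> degree q \<le> 1\<close> show False by simp
  qed
qed

lemma pY_total: "(\<integral>\<^sup>+y. ennreal (pY y) \<partial>lborel) = 1"
proof -
  have "emeasure (distr M lborel (\<lambda>\<omega>. X \<omega> + N \<omega>)) UNIV = 1"
    by (subst emeasure_distr) (auto simp: emeasure_space_1)
  then have "emeasure (density lborel (\<lambda>y. ennreal (pY y))) UNIV = 1" by (simp add: distr_Y)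
  then show ?thesis by (subst (asm) emeasure_density) auto
qed

end



context tw begin

lemma deg1_gauss:
  assumes h: "\<And>y. hY y = (a + b * y) * pY y"
  shows "\<exists>m s. s > 0 \<and> (\<forall>y. pY y = normal_density m s y)"
proof -
  define c where "c = b - 1"
  have h': "\<And>y. hY y = poly [:a, b:] y * pY y" using h by (simp add: algebra_simps)
  have pe: "\<And>y. poly ([:a, b:] - [:0, 1:]) y = a + c * y" by (simp add: c_def algebra_simps)
  have dL: "\<And>y. ((\<lambda>y. ln (pY y)) has_real_derivative (a + c * y)) (at y)"
    using L_deriv[OF h'] unfolding pe .
  have Lform: "ln (pY y) = ln (pY 0) + (a * y + c * y\<^sup>2 / 2)" for y
  proof -
    have d0: "\<forall>x. ((\<lambda>y. ln (pY y) - (a * y + c * y\<^sup>2 / 2)) has_real_derivative 0) (at x)"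
    proof
      fix x
      have "((\<lambda>y. ln (pY y) - (a * y + c * y\<^sup>2 / 2)) has_real_derivative (a + c * x) - (a * 1 + c * (2 * x) / 2)) (at x)"
        by (intro DERIV_diff dL DERIV_add DERIV_cmult DERIV_divide) (auto intro!: derivative_eq_intros)
      then show "((\<lambda>y. ln (pY y) - (a * y + c * y\<^sup>2 / 2)) has_real_derivative 0) (at x)" by simp
    qed
    have "ln (pY y) - (a * y + c * y\<^sup>2 / 2) = ln (pY 0) - (a * 0 + c * 0\<^sup>2 / 2)"
      by (rule DERIV_isconst_all[OF d0])
    then show ?thesis by simp
  qed
  have pform: "pY y = pY 0 * exp (a * y + c * y\<^sup>2 / 2)" for y
  proof -
    have "pY y = exp (ln (pY y))" by (rule exp_ln[symmetric, OF pY_pos])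
    also have "\<dots> = exp (ln (pY 0)) * exp (a * y + c * y\<^sup>2 / 2)" by (subst Lform) (simp only: exp_add)
    also have "\<dots> = pY 0 * exp (a * y + c * y\<^sup>2 / 2)" by (simp only: exp_ln[OF pY_pos])
    finally show ?thesis .
  qed
  consider "c > 0" | "c = 0" "a > 0" | "c = 0" "a < 0" | "c = 0" "a = 0" | "c < 0" by linarith
  then show ?thesis
  proof cases
    case 1
    have "\<exists>y\<ge>(1 - a) / c. ln (pY y) > 0"
    proof (rule grow[OF dL])
      fix y assume "(1 - a) / c \<le> y"
      then have "1 - a \<le> c * y" using 1 by (simp add: pos_divide_le_eq mult.commute)
      then show "1 \<le> a + c * y" by simp
    qed simp
    then show ?thesis using L_upper by (meson not_less)
  next
    case 2
    have "\<exists>y\<ge>0. ln (pY y) > 0"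
      by (rule grow[OF dL, of 0 a]) (use 2 in auto)
    then show ?thesis using L_upper by (meson not_less)
  next
    case 3
    have "\<exists>y. ln (pY y) > 0"
      by (rule grow_left[OF dL, of 0 "- a"]) (use 3 in auto)
    then show ?thesis using L_upper by (meson not_less)
  next
    case 4
    have "(\<integral>\<^sup>+y. ennreal (pY y) \<partial>lborel) = (\<integral>\<^sup>+y. ennreal (pY 0) \<partial>(lborel :: real measure))"
    proof -
      have e: "(\<lambda>y. ennreal (pY y)) = (\<lambda>y. ennreal (pY 0))"
      proof (rule ext)
        fix y show "ennreal (pY y) = ennreal (pY 0)" using pform[of y] 4 by simp
      qed
      show ?thesis by (simp only: e)
    qed
    also have "\<dots> = \<infinity>" using pY_pos[of 0] by (simp add: ennreal_mult_top)
    finally show ?thesis using pY_total by simp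
  next
    case 5
    define \<beta> where "\<beta> = - c"
    have b0: "\<beta> > 0" using 5 by (simp add: \<beta>_def)
    define m where "m = a / \<beta>"
    define s where "s = sqrt (1 / \<beta>)"
    have s0: "s > 0" using b0 by (simp add: s_def)
    have s2: "s\<^sup>2 = 1 / \<beta>" using b0 by (simp add: s_def)
    define K where "K = pY 0 * exp (a\<^sup>2 / (2 * \<beta>)) * sqrt (2 * pi * s\<^sup>2)"
    have K0: "K > 0" using pY_pos[of 0] s0 by (simp add: K_def)
    have ex: "a * y + c * y\<^sup>2 / 2 = a\<^sup>2 / (2 * \<beta>) + (- (y - m)\<^sup>2 / (2 * s\<^sup>2))" for y
      unfolding s2 m_def using b0 by (simp add: \<beta>_def field_simps power2_eq_square)
    have pK: "pY y = K * normal_density m s y" for y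
    proof -
      have "pY y = pY 0 * (exp (a\<^sup>2 / (2 * \<beta>)) * exp (- (y - m)\<^sup>2 / (2 * s\<^sup>2)))"
        by (subst pform) (simp add: ex exp_add[symmetric])
      also have "\<dots> = K * normal_density m s y"
        using s0 by (simp add: K_def normal_density_def)
      finally show ?thesis .
    qed
    have "1 = (\<integral>\<^sup>+y. ennreal (pY y) \<partial>lborel)" using pY_total by simp
    also have "\<dots> = (\<integral>\<^sup>+y. ennreal K * ennreal (normal_density m s y) \<partial>lborel)"
      using K0 by (intro nn_integral_cong) (simp add: pK ennreal_mult)
    also have "\<dots> = ennreal K * (\<integral>\<^sup>+y. ennreal (normal_density m s y) \<partial>lborel)"
      by (rule nn_integral_cmult) simp
    also have "(\<integral>\<^sup>+y. ennreal (normal_density m s y) \<partial>lborel) = 1"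
      using s0 by (subst nn_integral_eq_integral) auto
    finally have "K = 1" using K0 by simp
    then show ?thesis using pK s0 by auto
  qed
qed

end



lemma real_distribution_normal: "s > 0 \<Longrightarrow> real_distribution (density lborel (normal_density m s))"
  unfolding real_distribution_def real_distribution_axioms_def
  by (auto intro: prob_space_normal_density)

lemma real_distribution_return: "real_distribution (return borel m)"
  unfolding real_distribution_def real_distribution_axioms_def
  by (auto intro: prob_space_return)

lemma nd_deriv:
  assumes s0: "s > 0"
  shows "(normal_density \<mu> s has_real_derivative (- (y - \<mu>) / s\<^sup>2 * normal_density \<mu> s y)) (at y)"
proof -
  have "((\<lambda>y. 1 / sqrt (2 * pi * s\<^sup>2) * exp (- (y - \<mu>)\<^sup>2 / (2 * s\<^sup>2))) has_real_derivative
      1 / sqrt (2 * pi * s\<^sup>2) * (exp (- (y - \<mu>)\<^sup>2 / (2 * s\<^sup>2)) * (- (2 * (y - \<mu>)) / (2 * s\<^sup>2)))) (at y)"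
  proof -
    have sq: "((\<lambda>y. (y - \<mu>)\<^sup>2) has_real_derivative 2 * (y - \<mu>)) (at y)"
      by (auto intro!: derivative_eq_intros)
    have inner: "((\<lambda>y. - (y - \<mu>)\<^sup>2 / (2 * s\<^sup>2)) has_real_derivative (- (2 * (y - \<mu>)) / (2 * s\<^sup>2))) (at y)"
      by (rule DERIV_cdivide[OF DERIV_minus[OF sq]])
    show ?thesis by (intro DERIV_cmult DERIV_fun_exp inner)
  qed
  moreover have "1 / sqrt (2 * pi * s\<^sup>2) * (exp (- (y - \<mu>)\<^sup>2 / (2 * s\<^sup>2)) * (- (2 * (y - \<mu>)) / (2 * s\<^sup>2)))
      = - (y - \<mu>) / s\<^sup>2 * (1 / sqrt (2 * pi * s\<^sup>2) * exp (- (y - \<mu>)\<^sup>2 / (2 * s\<^sup>2)))"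
    using s0 by (simp add: field_simps)
  ultimately show ?thesis unfolding normal_density_def[abs_def] by (simp only:)
qed

context tw begin

lemma gauss_to_X:
  assumes s0: "s > 0" and pn: "\<And>y. pY y = normal_density m s y"
  shows "(\<exists>\<mu> \<sigma>. \<sigma> > 0 \<and> distributed M lborel X (normal_density \<mu> \<sigma>)) \<or> (\<exists>c. AE \<omega> in M. X \<omega> = c)"
proof -
  have pe: "(\<lambda>y. ennreal (pY y)) = (\<lambda>y. ennreal (normal_density m s y))" by (simp add: pn)
  have dY: "distr M borel (\<lambda>\<omega>. X \<omega> + N \<omega>) = density lborel (normal_density m s)"
  proof -
    have "distr M borel (\<lambda>\<omega>. X \<omega> + N \<omega>) = distr M lborel (\<lambda>\<omega>. X \<omega> + N \<omega>)" by (rule distr_cong) auto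
    also have "\<dots> = density lborel (\<lambda>y. ennreal (pY y))" by (rule distr_Y)
    finally show ?thesis unfolding pe .
  qed
  define cX where "cX = char (distr M borel X)"
  have rdX: "real_distribution (distr M borel X)" by (rule real_distribution_distr) simp
  have key: "cX t = iexp (t * m) * complex_of_real (exp (- (s\<^sup>2 - 1) * t\<^sup>2 / 2))" for t
  proof -
    have "char (distr M borel (\<lambda>\<omega>. X \<omega> + N \<omega>)) t = cX t * char (distr M borel N) t"
      unfolding cX_def by (rule char_distr_add[OF ind])
    also have "char (distr M borel N) t = complex_of_real (exp (- (t\<^sup>2) / 2))"
      by (simp add: distrN char_std_normal_distribution)
    finally have 1: "char (distr M borel (\<lambda>\<omega>. X \<omega> + N \<omega>)) t = cX t * complex_of_real (exp (- (t\<^sup>2) / 2))" .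
    have 2: "char (distr M borel (\<lambda>\<omega>. X \<omega> + N \<omega>)) t = iexp (t * m) * complex_of_real (exp (- (s * t)\<^sup>2 / 2))"
      unfolding dY by (rule char_normal[OF s0])
    have ee: "- (s * t)\<^sup>2 / 2 = - (t\<^sup>2) / 2 + (- (s\<^sup>2 - 1) * t\<^sup>2 / 2)" by (simp add: power_mult_distrib algebra_simps)
    have "cX t * complex_of_real (exp (- (t\<^sup>2) / 2)) =
        (iexp (t * m) * complex_of_real (exp (- (s\<^sup>2 - 1) * t\<^sup>2 / 2))) * complex_of_real (exp (- (t\<^sup>2) / 2))"
      using 1 2 unfolding ee exp_add by (simp add: mult_ac)
    then show ?thesis by (rule mult_right_cancel[THEN iffD1, rotated]) simp
  qed
  have "norm (cX 1) \<le> 1" unfolding cX_def by (rule real_distribution.cmod_char_le_1[OF rdX])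
  then have "exp (- (s\<^sup>2 - 1) / 2) \<le> 1" unfolding key by (simp add: norm_mult)
  then have "s\<^sup>2 \<ge> 1" by simp
  then have s1: "s \<ge> 1"
  proof -
    assume sq: "s\<^sup>2 \<ge> 1"
    show "s \<ge> 1"
    proof (rule ccontr)
      assume "\<not> 1 \<le> s"
      then have "s * s < 1 * 1" using s0 by (intro mult_strict_mono) auto
      with sq show False by (simp add: power2_eq_square)
    qed
  qed
  show ?thesis
  proof (cases "s = 1")
    case True
    have "cX = char (return borel m)"
    proof (rule ext)
      fix t show "cX t = char (return borel m) t" using key[of t] True by (simp add: char_return)
    qed
    then have dr: "distr M borel X = return borel m"
      unfolding cX_def by (rule Levy_uniqueness[OF rdX real_distribution_return])
    have ar: "AE x in return borel m. x = m" by (subst AE_return) auto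
    have "AE x in distr M borel X. x = m" unfolding dr by (rule ar)
    then have "AE \<omega> in M. X \<omega> = m" by (subst (asm) AE_distr_iff) auto
    then show ?thesis by blast
  next
    case False
    with s1 have s1': "s > 1" by simp
    define \<sigma> where "\<sigma> = sqrt (s\<^sup>2 - 1)"
    have "s\<^sup>2 > 1" using one_less_power[OF s1', of 2] by simp
    then have \<sigma>0: "\<sigma> > 0" by (simp add: \<sigma>_def)
    have \<sigma>2: "\<sigma>\<^sup>2 = s\<^sup>2 - 1" using \<open>s\<^sup>2 > 1\<close> by (simp add: \<sigma>_def)
    have "cX = char (density lborel (normal_density m \<sigma>))"
    proof (rule ext)
      fix t
      have "- (s\<^sup>2 - 1) * t\<^sup>2 / 2 = - (\<sigma> * t)\<^sup>2 / 2" by (simp add: power_mult_distrib \<sigma>2 algebra_simps)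
      then show "cX t = char (density lborel (normal_density m \<sigma>)) t"
        using key[of t] by (simp add: char_normal[OF \<sigma>0])
    qed
    then have dX: "distr M borel X = density lborel (normal_density m \<sigma>)"
      unfolding cX_def by (rule Levy_uniqueness[OF rdX real_distribution_normal[OF \<sigma>0]])
    have "distr M lborel X = distr M borel X" by (rule distr_cong) auto
    then have "distributed M lborel X (normal_density m \<sigma>)"
      unfolding distributed_def using dX by auto
    then show ?thesis using \<sigma>0 by blast
  qed
qed

end



context tw begin

lemma pY_ne0: "pY y \<noteq> 0" using pY_pos[of y] by simp

lemma cond_from_h:
  assumes h: "\<And>y. hY y = poly q y * pY y"
  shows "\<exists>q. AE \<omega> in M. real_cond_exp M (vimage_algebra (space M) (\<lambda>\<omega>. X \<omega> + N \<omega>) borel) X \<omega> = poly q (X \<omega> + N \<omega>)"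
proof -
  have "AE \<omega> in M. real_cond_exp M (vimage_algebra (space M) (\<lambda>\<omega>. X \<omega> + N \<omega>) borel) X \<omega> = poly q (X \<omega> + N \<omega>)"
    using condexp by eventually_elim (simp add: h pY_ne0)
  then show ?thesis by blast
qed

lemma X_gauss_cond:
  assumes \<sigma>0: "\<sigma> > 0" and dX: "distributed M lborel X (normal_density \<mu> \<sigma>)"
  shows "\<exists>q. AE \<omega> in M. real_cond_exp M (vimage_algebra (space M) (\<lambda>\<omega>. X \<omega> + N \<omega>) borel) X \<omega> = poly q (X \<omega> + N \<omega>)"
proof -
  define s where "s = sqrt (\<sigma>\<^sup>2 + 1)"
  have "\<sigma>\<^sup>2 + 1 > 0" by (simp add: add_nonneg_pos)
  then have s0: "s > 0" by (simp add: s_def)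
  have dY: "distributed M lborel (\<lambda>\<omega>. X \<omega> + N \<omega>) (normal_density \<mu> s)"
    using add_indep_normal[OF ind \<sigma>0 zero_less_one dX Nd] by (simp add: s_def)
  then have "density lborel (\<lambda>y. ennreal (pY y)) = density lborel (\<lambda>y. ennreal (normal_density \<mu> s y))"
    using distr_Y by (simp add: distributed_def)
  then have "AE y in lborel. ennreal (pY y) = ennreal (normal_density \<mu> s y)"
    by (subst (asm) sigma_finite_measure.density_unique_iff[OF lborel.sigma_finite_measure_axioms]) auto
  then have ae: "AE y in lborel. pY y = normal_density \<mu> s y"
    by eventually_elim (simp add: pY_nonneg)
  have pn: "pY y = normal_density \<mu> s y" for y
    by (rule cont_ae_eq[OF pY_cont _ ae]) (rule DERIV_isCont[OF nd_deriv[OF s0]])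
  have h: "hY y = poly [:\<mu> / s\<^sup>2, 1 - 1 / s\<^sup>2:] y * pY y" for y
  proof -
    have d1: "(pY has_real_derivative (hY y - y * pY y)) (at y)" by (rule pY_deriv)
    have "pY = normal_density \<mu> s" by (rule ext) (rule pn)
    then have d2: "(pY has_real_derivative (- (y - \<mu>) / s\<^sup>2 * pY y)) (at y)"
      using nd_deriv[OF s0, of \<mu> y] by simp
    have "hY y - y * pY y = - (y - \<mu>) / s\<^sup>2 * pY y" by (rule DERIV_unique[OF d1 d2])
    then show ?thesis using s0 by (simp add: field_simps)
  qed
  show ?thesis by (rule cond_from_h[OF h])
qed

lemma X_const_cond:
  assumes ae: "AE \<omega> in M. X \<omega> = c"
  shows "\<exists>q. AE \<omega> in M. real_cond_exp M (vimage_algebra (space M) (\<lambda>\<omega>. X \<omega> + N \<omega>) borel) X \<omega> = poly q (X \<omega> + N \<omega>)"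
proof -
  have "P = distr M borel (\<lambda>_. c)" unfolding P_def
    by (rule distr_cong_AE[OF refl refl ae]) auto
  also have "\<dots> = return borel c" by (rule distr_const) simp
  finally have Pr: "P = return borel c" .
  have h: "hY y = poly [:c:] y * pY y" for y
    unfolding hY_def pY_def Pr by (subst (1 2) integral_return) auto
  show ?thesis by (rule cond_from_h[OF h])
qed

end

theorem theorem2p2:
  fixes M :: "'a measure" and X N Y :: "'a \<Rightarrow> real"
  assumes "prob_space M"
    and "X \<in> borel_measurable M" and "integrable M X"
    and "distributed M lborel N std_normal_density"
    and "prob_space.indep_var M borel X borel N"
    and "Y = (\<lambda>\<omega>. X \<omega> + N \<omega>)"
  shows "\<not> (\<exists>q :: real poly. degree q \<ge> 2 \<and>
            (AE \<omega> in M. real_cond_exp M (vimage_algebra (space M) Y borel) X \<omega> = poly q (Y \<omega>)))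
   \<and> (integrable M (\<lambda>\<omega>. (X \<omega>)\<^sup>2) \<longrightarrow>
         ((\<exists>q :: real poly. AE \<omega> in M.
              real_cond_exp M (vimage_algebra (space M) Y borel) X \<omega> = poly q (Y \<omega>))
          \<longleftrightarrow> ((\<exists>\<mu> \<sigma>. \<sigma> > 0 \<and> distributed M lborel X (normal_density \<mu> \<sigma>))
               \<or> (\<exists>c. AE \<omega> in M. X \<omega> = c))))"
proof -
  interpret T: tw M X N
    unfolding tw_def tw_axioms_def using assms(1-5) by auto
  note Y = assms(6)
  have A: "\<not> (\<exists>q :: real poly. degree q \<ge> 2 \<and>
            (AE \<omega> in M. real_cond_exp M (vimage_algebra (space M) Y borel) X \<omega> = poly q (Y \<omega>)))"
  proof
    assume "\<exists>q :: real poly. degree q \<ge> 2 \<and>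
            (AE \<omega> in M. real_cond_exp M (vimage_algebra (space M) Y borel) X \<omega> = poly q (Y \<omega>))"
    then obtain q :: "real poly" where q: "degree q \<ge> 2"
      "AE \<omega> in M. real_cond_exp M (vimage_algebra (space M) (\<lambda>\<omega>. X \<omega> + N \<omega>) borel) X \<omega> = poly q (X \<omega> + N \<omega>)"
      unfolding Y by blast
    from T.deg_le1[OF q(2)] q(1) show False by simp
  qed
  have B: "(\<exists>q :: real poly. AE \<omega> in M.
              real_cond_exp M (vimage_algebra (space M) Y borel) X \<omega> = poly q (Y \<omega>))
          \<longleftrightarrow> ((\<exists>\<mu> \<sigma>. \<sigma> > 0 \<and> distributed M lborel X (normal_density \<mu> \<sigma>))
               \<or> (\<exists>c. AE \<omega> in M. X \<omega> = c))"
    unfolding Y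
  proof
    assume "\<exists>q :: real poly. AE \<omega> in M. real_cond_exp M (vimage_algebra (space M) (\<lambda>\<omega>. X \<omega> + N \<omega>) borel) X \<omega> = poly q (X \<omega> + N \<omega>)"
    then obtain q :: "real poly" where q:
      "AE \<omega> in M. real_cond_exp M (vimage_algebra (space M) (\<lambda>\<omega>. X \<omega> + N \<omega>) borel) X \<omega> = poly q (X \<omega> + N \<omega>)"
      by blast
    have d: "degree q \<le> 1" by (rule T.deg_le1[OF q])
    have h: "T.hY y = (coeff q 0 + coeff q 1 * y) * T.pY y" for y
      using T.hY_poly[OF q, of y] poly_deg1[OF d, of y] by simp
    obtain m s where ms: "s > 0" "\<And>y. T.pY y = normal_density m s y"
      using T.deg1_gauss[OF h] by blast
    show "(\<exists>\<mu> \<sigma>. \<sigma> > 0 \<and> distributed M lborel X (normal_density \<mu> \<sigma>)) \<or> (\<exists>c. AE \<omega> in M. X \<omega> = c)"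
      by (rule T.gauss_to_X[OF ms])
  next
    assume "(\<exists>\<mu> \<sigma>. \<sigma> > 0 \<and> distributed M lborel X (normal_density \<mu> \<sigma>)) \<or> (\<exists>c. AE \<omega> in M. X \<omega> = c)"
    then show "\<exists>q :: real poly. AE \<omega> in M. real_cond_exp M (vimage_algebra (space M) (\<lambda>\<omega>. X \<omega> + N \<omega>) borel) X \<omega> = poly q (X \<omega> + N \<omega>)"
      using T.X_gauss_cond T.X_const_cond by blast
  qed
  show ?thesis using A B by blast
qed


end
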